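(* Let $(X,\|\cdot\|)$ be a Banach space, $A,B\subset X$ nonempty, let $\phi:A\times\mathbb{R}^+\to\mathbb{R}^+$ have the positive property about $A$, and suppose $A$ is a uniformly convex set about $\phi$. Then the ordered pair $(A,B)$ has the $BUC$ property.
   Context: The metric is $\rho(x,y)=\|x-y\|$; $\mathrm{dist}(A,B)=\inf\{\|a-b\|:a\in A,b\in B\}$; $B(x_0,r)=\{x\in X:\|x-x_0\|<r\}$; $\mathbb{R}^+=(0,\infty)$. A function $\phi:A\times\mathbb{R}^+\to\mathbb{R}^+$ has the positive property about $A$ if for every bounded subset $A'\subset A$ and every $\varepsilon_0>0$ one has $\inf\{\phi(x,\varepsilon):x\in A',\ \varepsilon\ge\varepsilon_0\}>0$. The set $A$ is uniformly convex about $\phi$ if for every $\varepsilon>0$ and all $x,y\in A$ with $\|x-y\|\ge\varepsilon$ one has $\frac{x+y}{2}\in A$ and $B\left(\frac{x+y}{2},\phi\left(\frac{x+y}{2},\varepsilon\right)\right)\subset A$. The ordered pair $(A,B)$ has the bounded $UC$ property ($BUC$) if for all bounded sequences $\{x_n\},\{z_n\}\subset A$ and every sequence $\{y_n\}\subset B$ with $\lim_n\|x_n-y_n\|=\lim_n\|z_n-y_n\|=\mathrm{dist}(A,B)$ one has $\lim_n\|x_n-z_n\|=0$. *)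

theory Defs
  imports "HOL-Analysis.Analysis"
begin

definition set_dist_norm :: "'a::real_normed_vector set \<Rightarrow> 'a set \<Rightarrow> real" where
  "set_dist_norm A B = Inf {norm (a - b) | a b. a \<in> A \<and> b \<in> B}"

definition maps_to_pos :: "'a set \<Rightarrow> ('a \<Rightarrow> real \<Rightarrow> real) \<Rightarrow> bool" where
  "maps_to_pos A \<phi> \<longleftrightarrow> (\<forall>x\<in>A. \<forall>\<epsilon>>0. \<phi> x \<epsilon> > 0)"

text \<open>Positive property: the infimum over a bounded subset and epsilon >= eps0 is positive,
  i.e. there is a positive lower bound (with inf of the empty set being +infinity).\<close>
definition positive_property :: "'a::real_normed_vector set \<Rightarrow> ('a \<Rightarrow> real \<Rightarrow> real) \<Rightarrow> bool" where
  "positive_property A \<phi> \<longleftrightarrow>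
     (\<forall>A'. A' \<subseteq> A \<and> bounded A' \<longrightarrow>
        (\<forall>\<epsilon>0>0. \<exists>c>0. \<forall>x\<in>A'. \<forall>\<epsilon>\<ge>\<epsilon>0. c \<le> \<phi> x \<epsilon>))"

definition uniformly_convex_about :: "'a::real_normed_vector set \<Rightarrow> ('a \<Rightarrow> real \<Rightarrow> real) \<Rightarrow> bool" where
  "uniformly_convex_about A \<phi> \<longleftrightarrow>
     (\<forall>\<epsilon>>0. \<forall>x\<in>A. \<forall>y\<in>A. norm (x - y) \<ge> \<epsilon> \<longrightarrow>
        (x + y) /\<^sub>R 2 \<in> A \<and> ball ((x + y) /\<^sub>R 2) (\<phi> ((x + y) /\<^sub>R 2) \<epsilon>) \<subseteq> A)"

definition BUC :: "'a::real_normed_vector set \<Rightarrow> 'a set \<Rightarrow> bool" where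
  "BUC A B \<longleftrightarrow>
     (\<forall>x z y :: nat \<Rightarrow> 'a.
        (\<forall>n. x n \<in> A) \<and> (\<forall>n. z n \<in> A) \<and> (\<forall>n. y n \<in> B) \<and>
        bounded (range x) \<and> bounded (range z) \<and>
        (\<lambda>n. norm (x n - y n)) \<longlonglongrightarrow> set_dist_norm A B \<and>
        (\<lambda>n. norm (z n - y n)) \<longlonglongrightarrow> set_dist_norm A B
        \<longrightarrow> (\<lambda>n. norm (x n - z n)) \<longlonglongrightarrow> 0)"

end

theory Submission
  imports Defs
begin

theorem theorem42:
  fixes A B :: "'a::banach set" and \<phi> :: "'a \<Rightarrow> real \<Rightarrow> real"
  assumes "A \<noteq> {}" and "B \<noteq> {}"
    and "maps_to_pos A \<phi>"
    and "positive_property A \<phi>"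
    and "uniformly_convex_about A \<phi>"
  shows "BUC A B"
proof -
  define d where "d = set_dist_norm A B"
  have dle: "d \<le> norm (a - b)" if "a \<in> A" "b \<in> B" for a b
    unfolding d_def set_dist_norm_def
    by (rule cInf_lower) (use that in \<open>auto intro: bdd_belowI[where m=0]\<close>)
  have d0: "d \<ge> 0"
    unfolding d_def set_dist_norm_def
    by (rule cInf_greatest) (use assms(1,2) in auto)
  show ?thesis unfolding BUC_def d_def[symmetric]
  proof (intro allI impI)
    fix x z y :: "nat \<Rightarrow> 'a"
    assume H: "(\<forall>n. x n \<in> A) \<and> (\<forall>n. z n \<in> A) \<and> (\<forall>n. y n \<in> B) \<and>
        bounded (range x) \<and> bounded (range z) \<and>
        (\<lambda>n. norm (x n - y n)) \<longlonglongrightarrow> d \<and> (\<lambda>n. norm (z n - y n)) \<longlonglongrightarrow> d"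
    show "(\<lambda>n. norm (x n - z n)) \<longlonglongrightarrow> 0"
    proof (rule ccontr)
      assume nt: "\<not> ?thesis"
      then obtain \<epsilon> where ep: "\<epsilon> > 0" and fr: "\<And>no. \<exists>n\<ge>no. \<epsilon> \<le> norm (x n - z n)"
        unfolding LIMSEQ_iff by (auto simp: not_less)
      define M where "M = {(x n + z n) /\<^sub>R 2 | n. \<epsilon> \<le> norm (x n - z n)}"
      have UC: "\<And>u v. u \<in> A \<Longrightarrow> v \<in> A \<Longrightarrow> \<epsilon> \<le> norm (u - v) \<Longrightarrow>
          (u + v) /\<^sub>R 2 \<in> A \<and> ball ((u + v) /\<^sub>R 2) (\<phi> ((u + v) /\<^sub>R 2) \<epsilon>) \<subseteq> A"
        using assms(5) ep unfolding uniformly_convex_about_def by blast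
      have MA: "M \<subseteq> A" unfolding M_def using UC H by auto
      obtain Bx where Bx: "\<And>n. norm (x n) \<le> Bx" using H unfolding bounded_iff by blast
      obtain Bz where Bz: "\<And>n. norm (z n) \<le> Bz" using H unfolding bounded_iff by blast
      have "bounded M" unfolding bounded_iff M_def
      proof (intro exI[of _ "(Bx + Bz)/2"] ballI)
        fix v assume "v \<in> {(x n + z n) /\<^sub>R 2 | n. \<epsilon> \<le> norm (x n - z n)}"
        then obtain n where v: "v = (x n + z n) /\<^sub>R 2" by blast
        have "norm (x n + z n) \<le> Bx + Bz" using Bx[of n] Bz[of n] norm_triangle_ineq[of "x n" "z n"] by linarith
        then show "norm v \<le> (Bx + Bz)/2" unfolding v by simp
      qed
      then obtain c where c: "c > 0" and cle: "\<And>v. v \<in> M \<Longrightarrow> c \<le> \<phi> v \<epsilon>"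
        using assms(4) MA ep \<open>bounded M\<close> unfolding positive_property_def
        by (metis order_refl)
      define r where "r = min (c/2) (\<epsilon>/2)"
      have r: "r > 0" "r \<le> c/2" "r \<le> \<epsilon>/2" using c ep unfolding r_def by auto
      have "eventually (\<lambda>n. norm (x n - y n) < d + r) sequentially"
        using H r(1) by (intro order_tendstoD) auto
      moreover have "eventually (\<lambda>n. norm (z n - y n) < d + r) sequentially"
        using H r(1) by (intro order_tendstoD) auto
      ultimately obtain no where no: "\<And>n. n \<ge> no \<Longrightarrow> norm (x n - y n) < d + r \<and> norm (z n - y n) < d + r"
        unfolding eventually_sequentially by (metis max.boundedE)
      obtain n where n: "n \<ge> no" "\<epsilon> \<le> norm (x n - z n)" using fr by blast
      define m where "m = (x n + z n) /\<^sub>R 2"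
      have mM: "m \<in> M" unfolding m_def M_def using n by blast
      have ballA: "ball m (\<phi> m \<epsilon>) \<subseteq> A"
        using UC H n(2) unfolding m_def by blast
      have cphi: "c \<le> \<phi> m \<epsilon>" using cle mM by blast
      have xy: "norm (x n - y n) < d + r" and zy: "norm (z n - y n) < d + r" using no n(1) by auto
      have "m - y n = ((x n - y n) + (z n - y n)) /\<^sub>R 2" unfolding m_def by (simp add: algebra_simps flip: scaleR_add_left)
      hence "norm (m - y n) = norm ((x n - y n) + (z n - y n)) / 2" by simp
      also have "\<dots> \<le> (norm (x n - y n) + norm (z n - y n)) / 2"
        using norm_triangle_ineq by (simp add: divide_right_mono)
      finally have my0: "norm (m - y n) \<le> (norm (x n - y n) + norm (z n - y n)) / 2" .
      have my: "norm (m - y n) < d + r" using my0 xy zy by argo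
      show False
      proof (cases "norm (m - y n) < r")
        case True
        hence "y n \<in> ball m (\<phi> m \<epsilon>)" using r cphi by (simp add: dist_norm)
        hence "y n \<in> A" using ballA by blast
        hence "d \<le> 0" using dle[of "y n" "y n"] H by auto
        hence "d = 0" using d0 by simp
        have "norm (x n - z n) \<le> norm (x n - y n) + norm (z n - y n)"
          using norm_triangle_ineq4[of "x n - y n" "z n - y n"] by simp
        then show False using xy zy n(2) r \<open>d = 0\<close> by linarith
      next
        case False
        define L where "L = norm (m - y n)"
        have L: "L \<ge> r" "L > 0" using False r unfolding L_def by auto
        define p where "p = m + (r / L) *\<^sub>R (y n - m)"
        have "dist m p = r" unfolding p_def dist_norm using L
          by (simp add: L_def norm_minus_commute abs_of_pos[OF r(1)])
        hence "p \<in> ball m (\<phi> m \<epsilon>)" using r c cphi by simp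
        hence "p \<in> A" using ballA by blast
        have "p - y n = (1 - r / L) *\<^sub>R (m - y n)" unfolding p_def by (simp add: algebra_simps)
        hence "norm (p - y n) = (1 - r/L) * L" using L unfolding L_def by simp
        also have "\<dots> = L - r" using L by (simp add: field_simps)
        finally have "norm (p - y n) < d" using my unfolding L_def by linarith
        with dle[OF \<open>p \<in> A\<close>, of "y n"] H show False by auto
      qed
    qed
  qed
qed

end
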